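(* Let $D$ be an arbitrary subset of $\mathbb{Z}^d$ and $g$ a function in $\ell^1(D)$. Let $k,t$ be positive integers with $k<t$ and let $r>0$. For any $x\in\overline D$, $$P\Big(\Big\|\frac1tL^D_t-g^2\Big\|_{1,D}\le r,\ \tau<\infty\Big)\le\frac{2\,P_x\Big(\Big\|\frac1tL^D_t-g^2\Big\|_{1,D}\le r+4\frac{k}{t-k},\ \tau<\infty\Big)}{P_x(S_k=0)+P_x(S_{k-1}=0)}.$$
   Context: $P_x$ is the law of the simple random walk $(S_j)$ on $\mathbb{Z}^d$ started at $x$, $P=P_0$. $L_j(y)=\sum_{i=0}^{j-1}1_{\{S_i=y\}}$, $L_j(D)=\sum_{y\in D}L_j(y)$, $\tau=\tau(D,t)=\inf\{j\ge1:L_j(D)=t\}$, and $L^D_t(y)=L_{\tau(D,t)}(y)$ for $y\in D$. $\|f\|_{1,D}=\sum_{y\in D}|f(y)|$. $\overline D=D\cup\{x:\exists y\in D,|x-y|=1\}$. *)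

theory Defs
  imports "HOL-Probability.Probability"
begin

text \<open>Simple random walk on the lattice (int ^ 'd), d = CARD('d).\<close>

definition srw_steps :: "(int ^ 'd) set" where
  "srw_steps = {v. \<exists>i. v = axis i 1 \<or> v = axis i (-1)}"

definition srw_step_pmf :: "(int ^ 'd) pmf" where
  "srw_step_pmf = pmf_of_set srw_steps"

definition srw_space :: "(int ^ 'd) stream measure" where
  "srw_space = stream_space (measure_pmf srw_step_pmf)"

definition srw_pos :: "int ^ 'd \<Rightarrow> (int ^ 'd) stream \<Rightarrow> nat \<Rightarrow> int ^ 'd" where
  "srw_pos x w j = x + (\<Sum>i<j. w !! i)"

definition srw_prob :: "int ^ 'd \<Rightarrow> ((nat \<Rightarrow> int ^ 'd) \<Rightarrow> bool) \<Rightarrow> real" where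
  "srw_prob x A = measure srw_space {w \<in> space srw_space. A (srw_pos x w)}"

definition loc_time :: "(nat \<Rightarrow> 'a) \<Rightarrow> nat \<Rightarrow> 'a \<Rightarrow> nat" where
  "loc_time S j y = card {i. i < j \<and> S i = y}"

definition loc_time_set :: "(nat \<Rightarrow> 'a) \<Rightarrow> nat \<Rightarrow> 'a set \<Rightarrow> nat" where
  "loc_time_set S j D = card {i. i < j \<and> S i \<in> D}"

definition hit_tau :: "(nat \<Rightarrow> 'a) \<Rightarrow> 'a set \<Rightarrow> nat \<Rightarrow> enat" where
  "hit_tau S D t = (if \<exists>j\<ge>1. loc_time_set S j D = t
                    then enat (LEAST j. j \<ge> 1 \<and> loc_time_set S j D = t) else \<infinity>)"

text \<open>L^D_t(y) = L_{tau(D,t)}(y) (meaningful on the event tau < \<infinity>).\<close>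
definition loc_time_D :: "(nat \<Rightarrow> 'a) \<Rightarrow> 'a set \<Rightarrow> nat \<Rightarrow> 'a \<Rightarrow> nat" where
  "loc_time_D S D t y = loc_time S (the_enat (hit_tau S D t)) y"

definition norm1_on :: "'a set \<Rightarrow> ('a \<Rightarrow> real) \<Rightarrow> real" where
  "norm1_on D f = (\<Sum>\<^sub>\<infinity>y\<in>D. \<bar>f y\<bar>)"

text \<open>Closure: D together with its nearest neighbours.\<close>
definition lattice_closure :: "(int ^ 'd) set \<Rightarrow> (int ^ 'd) set" where
  "lattice_closure D = D \<union> {x. \<exists>y\<in>D. x - y \<in> srw_steps}"

end

theory Submission imports Defs begin

lemma lt_Suc: "loc_time S (Suc n) y = loc_time S n y + (if S n = y then 1 else 0)"
proof -
  have "{i. i < Suc n \<and> S i = y} = {i. i < n \<and> S i = y} \<union> (if S n = y then {n} else {})"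
    by (auto simp: less_Suc_eq)
  then show ?thesis unfolding loc_time_def by (auto simp: card_insert_if)
qed

lemma lts_Suc: "loc_time_set S (Suc n) D = loc_time_set S n D + (if S n \<in> D then 1 else 0)"
proof -
  have "{i. i < Suc n \<and> S i \<in> D} = {i. i < n \<and> S i \<in> D} \<union> (if S n \<in> D then {n} else {})"
    by (auto simp: less_Suc_eq)
  then show ?thesis unfolding loc_time_set_def by (auto simp: card_insert_if)
qed

lemma lts_le: "loc_time_set S n D \<le> n"
proof -
  have "card {i. i < n \<and> S i \<in> D} \<le> card {..<n}" by (rule card_mono) auto
  then show ?thesis unfolding loc_time_set_def by simp
qed

lemma lt_local: "(\<And>i. i < n \<Longrightarrow> S i = S' i) \<Longrightarrow> loc_time S n y = loc_time S' n y"
  unfolding loc_time_def by (metis (lifting))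

lemma lts_local: "(\<And>i. i < n \<Longrightarrow> S i = S' i) \<Longrightarrow> loc_time_set S n D = loc_time_set S' n D"
  unfolding loc_time_set_def by (metis (lifting))

lemma lt_0[simp]: "loc_time S 0 y = 0" by (simp add: loc_time_def)
lemma lts_0[simp]: "loc_time_set S 0 D = 0" by (simp add: loc_time_set_def)

lemma lt_shift: "loc_time S (j + n) y = loc_time S j y + loc_time (\<lambda>i. S (i + j)) n y"
  by (induction n) (simp_all add: lt_Suc add.commute)

lemma lts_shift: "loc_time_set S (j + n) D = loc_time_set S j D + loc_time_set (\<lambda>i. S (i + j)) n D"
  by (induction n) (simp_all add: lts_Suc add.commute)

lemma lt_mono: "n \<le> m \<Longrightarrow> loc_time S n y \<le> loc_time S m y"
  unfolding loc_time_def by (rule card_mono) auto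

lemma lts_mono: "n \<le> m \<Longrightarrow> loc_time_set S n D \<le> loc_time_set S m D"
  unfolding loc_time_set_def by (rule card_mono) auto

lemma lts_sum: "finite F \<Longrightarrow> F \<subseteq> D \<Longrightarrow> (\<And>i. i < n \<Longrightarrow> S i \<in> D \<Longrightarrow> S i \<in> F)
   \<Longrightarrow> loc_time_set S n D = (\<Sum>y\<in>F. loc_time S n y)"
proof (induction n)
  case 0
  then show ?case by (simp add: loc_time_def loc_time_set_def)
next
  case (Suc n)
  have "loc_time_set S (Suc n) D = (\<Sum>y\<in>F. loc_time S n y) + (if S n \<in> D then 1 else 0)"
    using Suc by (simp add: lts_Suc)
  also have "(if S n \<in> D then 1 else 0) = (\<Sum>y\<in>F. (if S n = y then 1 else 0::nat))"
    using Suc.prems by auto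
  finally show ?case by (simp add: lt_Suc sum.distrib)
qed

lemma hit_tau_enat: "hit_tau S D t = enat m \<longleftrightarrow>
   (1 \<le> m \<and> loc_time_set S m D = t \<and> (\<forall>j. 1 \<le> j \<and> j < m \<longrightarrow> loc_time_set S j D \<noteq> t))"
proof
  assume h: "hit_tau S D t = enat m"
  then have ex: "\<exists>j\<ge>1. loc_time_set S j D = t" unfolding hit_tau_def by (auto split: if_splits)
  then have m: "m = (LEAST j. j \<ge> 1 \<and> loc_time_set S j D = t)" using h unfolding hit_tau_def by simp
  show "1 \<le> m \<and> loc_time_set S m D = t \<and> (\<forall>j. 1 \<le> j \<and> j < m \<longrightarrow> loc_time_set S j D \<noteq> t)"
    using LeastI_ex[of "\<lambda>j. j \<ge> 1 \<and> loc_time_set S j D = t"] ex m not_less_Least[of _ "\<lambda>j. j \<ge> 1 \<and> loc_time_set S j D = t"]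
    by auto
next
  assume h: "1 \<le> m \<and> loc_time_set S m D = t \<and> (\<forall>j. 1 \<le> j \<and> j < m \<longrightarrow> loc_time_set S j D \<noteq> t)"
  then have "(LEAST j. j \<ge> 1 \<and> loc_time_set S j D = t) = m"
    by (intro Least_equality) (auto simp: not_less[symmetric])
  then show "hit_tau S D t = enat m" using h unfolding hit_tau_def by auto
qed

lemma hit_tau_local: "hit_tau S D t = enat m \<Longrightarrow> (\<And>i. i < m \<Longrightarrow> S i = S' i) \<Longrightarrow> hit_tau S' D t = enat m"
proof -
  assume h: "hit_tau S D t = enat m" and e: "\<And>i. i < m \<Longrightarrow> S i = S' i"
  have "\<And>j. j \<le> m \<Longrightarrow> loc_time_set S j D = loc_time_set S' j D"
    by (rule lts_local) (use e in auto)
  then show ?thesis using h unfolding hit_tau_enat by auto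
qed

lemma ltD_enat: "hit_tau S D t = enat m \<Longrightarrow> loc_time_D S D t y = loc_time S m y"
  unfolding loc_time_D_def by simp

lemma norm_perturb:
  fixes f h :: "'a \<Rightarrow> real"
  assumes F: "finite F" "F \<subseteq> D" and eq: "\<And>y. y \<in> D - F \<Longrightarrow> h y = f y"
    and fr: "infsum f D \<le> r" and hc: "(\<Sum>y\<in>F. h y - f y) \<le> c" and rc: "0 \<le> r + c"
  shows "infsum h D \<le> r + c"
proof -
  define e where "e y = h y - f y" for y
  have fin: "finite {y\<in>D. e y \<noteq> 0}"
    by (rule finite_subset[OF _ F(1)]) (use eq in \<open>auto simp: e_def\<close>)
  have es: "e summable_on D" by (rule finite_nonzero_values_imp_summable_on[OF fin])
  have es': "(\<lambda>y. - e y) summable_on D"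
    by (rule finite_nonzero_values_imp_summable_on) (use fin in simp)
  have ie: "infsum e D = (\<Sum>y\<in>F. e y)"
  proof -
    have "infsum e D = infsum e F"
      by (rule infsum_cong_neutral) (use eq F in \<open>auto simp: e_def\<close>)
    then show ?thesis using F by simp
  qed
  show ?thesis
  proof (cases "f summable_on D")
    case True
    have hs: "(\<lambda>y. f y + e y) summable_on D" by (rule summable_on_add[OF True es])
    have "infsum h D = infsum (\<lambda>y. f y + e y) D" by (rule infsum_cong) (simp add: e_def)
    also have "\<dots> = infsum f D + infsum e D" by (rule infsum_add[OF True es])
    also have "\<dots> \<le> r + c" using fr hc ie by (simp add: e_def)
    finally show ?thesis .
  next
    case False
    have "\<not> h summable_on D"
    proof
      assume "h summable_on D"
      then have "(\<lambda>y. h y + - e y) summable_on D" by (rule summable_on_add[OF _ es'])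
      then have "f summable_on D" by (rule summable_on_cong[THEN iffD1, rotated]) (simp add: e_def)
      with False show False by simp
    qed
    then show ?thesis using rc by (simp add: infsum_not_exists)
  qed
qed

lemma lt_zero: "y \<notin> S ` {..<n} \<Longrightarrow> loc_time S n y = 0"
  unfolding loc_time_def by (auto intro!: card_eq_0_iff[THEN iffD2])

lemma pathwise:
  fixes S S' :: "nat \<Rightarrow> 'a" and g :: "'a \<Rightarrow> real"
  assumes shift: "\<And>i. S' i = S (i + j)" and jk: "j \<le> k" and kt: "k < t"
    and tau': "hit_tau S' D t < \<infinity>"
    and norm': "norm1_on D (\<lambda>y. real (loc_time_D S' D t y) / real t - (g y)\<^sup>2) \<le> r"
    and r: "0 < r"
  shows "norm1_on D (\<lambda>y. real (loc_time_D S D t y) / real t - (g y)\<^sup>2)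
            \<le> r + 4 * (real k / (real t - real k)) \<and> hit_tau S D t < \<infinity>"
proof -
  obtain m' where m': "hit_tau S' D t = enat m'" using tau' by (cases "hit_tau S' D t") auto
  then have m'1: "1 \<le> m'" and m't: "loc_time_set S' m' D = t" by (auto simp: hit_tau_enat)
  have S'eq: "S' = (\<lambda>i. S (i + j))" using shift by auto
  have big: "loc_time_set S (j + m') D = loc_time_set S j D + t"
    using lts_shift[of S j m' D] m't S'eq by simp
  define n0 where "n0 = (LEAST n. t \<le> loc_time_set S n D)"
  have n0a: "t \<le> loc_time_set S n0 D" unfolding n0_def by (rule LeastI[of _ "j + m'"]) (simp add: big)
  have n0b: "n0 \<le> j + m'" unfolding n0_def by (rule Least_le) (simp add: big)
  have t0: "0 < t" using kt by simp
  have n0pos: "n0 \<noteq> 0" using n0a t0 by (cases "n0 = 0") auto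
  then obtain n1 where n1: "n0 = Suc n1" by (cases n0) auto
  have "\<not> t \<le> loc_time_set S n1 D" unfolding n0_def
    by (rule not_less_Least) (simp add: n1[unfolded n0_def])
  then have n0t: "loc_time_set S n0 D = t" using n0a lts_Suc[of S n1 D] n1 by (auto split: if_splits)
  have ex: "\<exists>j\<ge>1. loc_time_set S j D = t" using n0t n0pos by (intro exI[of _ n0]) auto
  define \<tau> where "\<tau> = (LEAST j. j \<ge> 1 \<and> loc_time_set S j D = t)"
  have tau: "hit_tau S D t = enat \<tau>" using ex by (simp add: hit_tau_def \<tau>_def)
  then have tau_t: "loc_time_set S \<tau> D = t" by (auto simp: hit_tau_enat)
  have tau_le: "\<tau> \<le> j + m'"
  proof -
    have "\<tau> \<le> n0" unfolding \<tau>_def by (rule Least_le) (use n0t n0pos in auto)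
    then show ?thesis using n0b by simp
  qed
  have jtau: "j \<le> \<tau>" using lts_le[of S \<tau> D] tau_t jk kt by simp
  define F where "F = D \<inter> S ` {..<j + m'}"
  have Ffin: "finite F" and FD: "F \<subseteq> D" unfolding F_def by auto
  have Fcov: "\<And>n i. n \<le> j + m' \<Longrightarrow> i < n \<Longrightarrow> S i \<in> D \<Longrightarrow> S i \<in> F"
    unfolding F_def by auto
  have sumF: "\<And>n. n \<le> j + m' \<Longrightarrow> loc_time_set S n D = (\<Sum>y\<in>F. loc_time S n y)"
    by (rule lts_sum[OF Ffin FD]) (use Fcov in auto)
  have L'eq: "\<And>y. loc_time_D S' D t y + loc_time S j y = loc_time S (j + m') y"
    using ltD_enat[OF m'] lt_shift[of S j m'] S'eq by simp
  have Leq: "\<And>y. loc_time_D S D t y = loc_time S \<tau> y" using ltD_enat[OF tau] by simp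
  have out: "\<And>y. y \<in> D - F \<Longrightarrow> loc_time S (j + m') y = 0"
    by (rule lt_zero) (auto simp: F_def)
  have ltm: "\<And>y. loc_time S \<tau> y \<le> loc_time S (j + m') y" by (rule lt_mono[OF tau_le])
  define f where "f y = \<bar>real (loc_time_D S' D t y) / real t - (g y)\<^sup>2\<bar>" for y
  define h where "h y = \<bar>real (loc_time_D S D t y) / real t - (g y)\<^sup>2\<bar>" for y
  have eqDF: "\<And>y. y \<in> D - F \<Longrightarrow> h y = f y"
  proof -
    fix y assume y: "y \<in> D - F"
    have "loc_time_D S' D t y = 0" using out[OF y] L'eq[of y] by simp
    moreover have "loc_time_D S D t y = 0" using out[OF y] ltm[of y] Leq by simp
    ultimately show "h y = f y" by (simp add: h_def f_def)
  qed
  have pw: "h y - f y \<le> (real (loc_time S (j + m') y) - real (loc_time S \<tau> y) + real (loc_time S j y)) / real t" for y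
  proof -
    have "h y - f y \<le> \<bar>real (loc_time_D S D t y) / real t - real (loc_time_D S' D t y) / real t\<bar>"
      unfolding h_def f_def by linarith
    also have "\<dots> = \<bar>real (loc_time_D S D t y) - real (loc_time_D S' D t y)\<bar> / real t"
      using t0 by (simp add: diff_divide_distrib[symmetric])
    also have "\<dots> \<le> (real (loc_time S (j + m') y) - real (loc_time S \<tau> y) + real (loc_time S j y)) / real t"
    proof (rule divide_right_mono)
      have a: "real (loc_time_D S' D t y) = real (loc_time S (j + m') y) - real (loc_time S j y)"
        using L'eq[of y] by (metis add_diff_cancel_right' of_nat_add)
      show "\<bar>real (loc_time_D S D t y) - real (loc_time_D S' D t y)\<bar>
         \<le> real (loc_time S (j + m') y) - real (loc_time S \<tau> y) + real (loc_time S j y)"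
        unfolding a Leq using ltm[of y] by (simp add: abs_le_iff)
    qed simp
    finally show ?thesis .
  qed
  have "(\<Sum>y\<in>F. h y - f y) \<le> (\<Sum>y\<in>F. (real (loc_time S (j + m') y) - real (loc_time S \<tau> y) + real (loc_time S j y)) / real t)"
    by (rule sum_mono) (rule pw)
  also have "\<dots> = (real (\<Sum>y\<in>F. loc_time S (j + m') y) - real (\<Sum>y\<in>F. loc_time S \<tau> y) + real (\<Sum>y\<in>F. loc_time S j y)) / real t"
    by (simp add: sum_divide_distrib[symmetric] sum.distrib sum_subtractf)
  also have "\<dots> = (real (loc_time_set S (j + m') D) - real (loc_time_set S \<tau> D) + real (loc_time_set S j D)) / real t"
    using sumF[of "j + m'"] sumF[OF tau_le] sumF[of j] by simp
  also have "\<dots> = 2 * real (loc_time_set S j D) / real t" using big tau_t by simp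
  also have "\<dots> \<le> 2 * real k / real t"
    using lts_le[of S j D] jk t0 by (intro divide_right_mono) auto
  also have "\<dots> \<le> 4 * (real k / (real t - real k))"
  proof -
    have "2 * real k / real t \<le> 2 * real k / (real t - real k)"
      using kt by (intro divide_left_mono) auto
    also have "\<dots> \<le> 4 * (real k / (real t - real k))" using kt by (simp add: divide_simps)
    finally show ?thesis .
  qed
  finally have hc: "(\<Sum>y\<in>F. h y - f y) \<le> 4 * (real k / (real t - real k))" .
  have "infsum h D \<le> r + 4 * (real k / (real t - real k))"
  proof (rule norm_perturb[OF Ffin FD eqDF _ hc])
    show "infsum f D \<le> r" using norm' by (simp add: norm1_on_def f_def[abs_def])
    show "0 \<le> r + 4 * (real k / (real t - real k))" using r kt by simp
  qed
  then show ?thesis using tau by (simp add: norm1_on_def h_def[abs_def])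
qed


lemma space_srw[simp]: "space srw_space = UNIV"
  by (simp add: srw_space_def space_stream_space)

lemma prob_srw: "prob_space srw_space"
  unfolding srw_space_def by (rule prob_space.prob_space_stream_space[OF prob_space_measure_pmf])

lemma emeasure_srw_UNIV[simp]: "emeasure srw_space UNIV = 1"
  using prob_space.emeasure_space_1[OF prob_srw] by simp

lemma sets_srw: "sets srw_space = sets (stream_space (count_space UNIV))"
  unfolding srw_space_def by (rule sets_stream_space_cong) (simp add: sets_measure_pmf_count_space)

lemma meas_prefix: "{w. P (stake m w)} \<in> sets srw_space"
proof -
  have "stake m \<in> measurable (stream_space (count_space UNIV)) (count_space (UNIV :: (int ^ 'd) list set))"
    by (rule measurable_stake)
  then have "stake m \<in> measurable srw_space (count_space (UNIV :: (int ^ 'd) list set))"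
    by (simp add: measurable_def sets_srw space_stream_space)
  from measurable_sets[OF this, of "{l. P l}"] show ?thesis by (simp add: vimage_def)
qed

lemma srw_pos_stake: "srw_pos x w j = x + sum_list (stake j w)"
  by (induction j) (simp_all add: srw_pos_def stake_Suc add.assoc del: stake.simps(2))

lemma srw_pos_Suc: "srw_pos x w (Suc j) = srw_pos (x + shd w) (stl w) j"
  unfolding srw_pos_def sum.lessThan_Suc_shift by (simp add: add.assoc)

lemma srw_pos_shift_stake: "i \<le> m \<Longrightarrow> srw_pos x (stake m w @- v) i = srw_pos x w i"
  unfolding srw_pos_def by (intro arg_cong[where f="\<lambda>s. x + s"] sum.cong) auto

lemma srw_pos_sdrop: "srw_pos x w j = 0 \<Longrightarrow> srw_pos 0 (sdrop j w) i = srw_pos x w (i + j)"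
proof (induction i)
  case 0
  then show ?case by (simp add: srw_pos_def)
next
  case (Suc i)
  then show ?case by (simp add: srw_pos_def sdrop_snth add.commute add.left_commute)
qed

lemma event_meas:
  assumes loc: "\<And>S S' m. hit_tau S D t = enat m \<Longrightarrow> (\<And>i. i \<le> m \<Longrightarrow> S i = S' i) \<Longrightarrow> B S \<Longrightarrow> B S'"
    and fin: "\<And>S. B S \<Longrightarrow> hit_tau S D t < \<infinity>"
  shows "{w. B (srw_pos x w)} \<in> sets srw_space"
proof -
  define Q where "Q m l = (hit_tau (srw_pos x (l @- sconst 0)) D t = enat m \<and> B (srw_pos x (l @- sconst 0)))" for m l
  have eq: "{w. B (srw_pos x w)} = (\<Union>m\<in>UNIV. {w. Q m (stake m w)})"
  proof (intro set_eqI iffI)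
    fix w assume "w \<in> {w. B (srw_pos x w)}"
    then have b: "B (srw_pos x w)" by simp
    obtain m where m: "hit_tau (srw_pos x w) D t = enat m" using fin[OF b] by (cases "hit_tau (srw_pos x w) D t") auto
    have agree: "\<And>i. i \<le> m \<Longrightarrow> srw_pos x w i = srw_pos x (stake m w @- sconst 0) i"
      by (simp add: srw_pos_shift_stake)
    have "hit_tau (srw_pos x (stake m w @- sconst 0)) D t = enat m"
      by (rule hit_tau_local[OF m]) (simp add: agree)
    moreover have "B (srw_pos x (stake m w @- sconst 0))" by (rule loc[OF m agree b])
    ultimately show "w \<in> (\<Union>m\<in>UNIV. {w. Q m (stake m w)})" by (auto simp: Q_def)
  next
    fix w assume "w \<in> (\<Union>m\<in>UNIV. {w. Q m (stake m w)})"
    then obtain m where q: "Q m (stake m w)" by auto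
    have agree: "\<And>i. i \<le> m \<Longrightarrow> srw_pos x (stake m w @- sconst 0) i = srw_pos x w i"
      by (simp add: srw_pos_shift_stake)
    show "w \<in> {w. B (srw_pos x w)}" using loc[OF _ agree] q by (auto simp: Q_def)
  qed
  have "\<And>m. {w. Q m (stake m w)} \<in> sets srw_space" by (rule meas_prefix)
  then show ?thesis unfolding eq by (intro sets.countable_UN) auto
qed

lemma meas_pos: "{w. P (srw_pos x w j)} \<in> sets srw_space"
  using meas_prefix[of "\<lambda>l. P (x + sum_list l)" j] by (simp add: srw_pos_stake)

lemma meas_sdrop: "E \<in> sets srw_space \<Longrightarrow> {w. sdrop j w \<in> E} \<in> sets srw_space"
  using measurable_sets[OF measurable_sdrop[of j "measure_pmf srw_step_pmf"], of E]
  by (simp add: srw_space_def[symmetric] vimage_def)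

lemma split_meas:
  assumes E: "E \<in> sets srw_space"
  shows "emeasure srw_space {w. P (srw_pos x w j) \<and> sdrop j w \<in> E}
        = emeasure srw_space {w. P (srw_pos x w j)} * emeasure srw_space E"
  using E
proof (induction j arbitrary: x)
  case 0
  then show ?case
    by (cases "P x") (simp_all add: srw_pos_def)
next
  case (Suc j)
  let ?M = "measure_pmf srw_step_pmf"
  have m1: "{w. P (srw_pos x w (Suc j)) \<and> sdrop (Suc j) w \<in> E} \<in> sets (stream_space ?M)"
    using sets.Int[OF meas_pos[of P x "Suc j"] meas_sdrop[OF E, of "Suc j"]]
    by (simp add: srw_space_def Collect_conj_eq)
  have m2: "{w. P (srw_pos x w (Suc j))} \<in> sets (stream_space ?M)"
    using meas_pos[of P x "Suc j"] by (simp add: srw_space_def)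
  have "emeasure srw_space {w. P (srw_pos x w (Suc j)) \<and> sdrop (Suc j) w \<in> E}
      = (\<integral>\<^sup>+s. emeasure srw_space {X. P (srw_pos (x + s) X j) \<and> sdrop j X \<in> E} \<partial>?M)"
    unfolding srw_space_def
    by (subst prob_space.emeasure_stream_space[OF prob_space_measure_pmf m1]) (simp add: srw_pos_Suc space_stream_space)
  also have "\<dots> = (\<integral>\<^sup>+s. emeasure srw_space {X. P (srw_pos (x + s) X j)} * emeasure srw_space E \<partial>?M)"
    using Suc by simp
  also have "\<dots> = (\<integral>\<^sup>+s. emeasure srw_space {X. P (srw_pos (x + s) X j)} \<partial>?M) * emeasure srw_space E"
    by (rule nn_integral_multc) (auto simp: measurable_def)
  also have "(\<integral>\<^sup>+s. emeasure srw_space {X. P (srw_pos (x + s) X j)} \<partial>?M) = emeasure srw_space {w. P (srw_pos x w (Suc j))}"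
    unfolding srw_space_def
    by (subst prob_space.emeasure_stream_space[OF prob_space_measure_pmf m2]) (simp add: srw_pos_Suc space_stream_space)
  finally show ?case .
qed


definition evt :: "(int ^ 'd) set \<Rightarrow> (int ^ 'd \<Rightarrow> real) \<Rightarrow> nat \<Rightarrow> real \<Rightarrow> (nat \<Rightarrow> int ^ 'd) \<Rightarrow> bool" where
  "evt D g t c S = (norm1_on D (\<lambda>y. real (loc_time_D S D t y) / real t - (g y)\<^sup>2) \<le> c \<and> hit_tau S D t < \<infinity>)"

lemma evt_meas: "{w. evt D g t c (srw_pos x w)} \<in> sets srw_space"
proof (rule event_meas[where D = D and t = t])
  fix S S' m
  assume h: "hit_tau S D t = enat m" and ag: "\<And>i. i \<le> m \<Longrightarrow> S i = S' i" and e: "evt D g t c S"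
  have h': "hit_tau S' D t = enat m" by (rule hit_tau_local[OF h]) (simp add: ag)
  have "\<And>y. loc_time_D S' D t y = loc_time_D S D t y"
    using ltD_enat[OF h] ltD_enat[OF h'] lt_local[of m S' S] ag by simp
  then show "evt D g t c S'" using e h' by (simp add: evt_def)
qed (simp add: evt_def)

lemma key:
  fixes D :: "(int ^ 'd) set" and g :: "int ^ 'd \<Rightarrow> real"
  assumes jk: "j \<le> k" and kt: "k < t" and r: "0 < r"
  shows "srw_prob x (\<lambda>S. S j = 0) * srw_prob 0 (evt D g t r)
     \<le> srw_prob x (evt D g t (r + 4 * (real k / (real t - real k))))"
proof -
  interpret prob_space srw_space by (rule prob_srw)
  define A0 where "A0 = {w. evt D g t r (srw_pos 0 w)}"
  define B where "B = {w. evt D g t (r + 4 * (real k / (real t - real k))) (srw_pos x w)}"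
  define C where "C = {w. srw_pos x w j = 0 \<and> sdrop j w \<in> A0}"
  have A0m: "A0 \<in> sets srw_space" unfolding A0_def by (rule evt_meas)
  have Bm: "B \<in> sets srw_space" unfolding B_def by (rule evt_meas)
  have CB: "C \<subseteq> B"
  proof
    fix w assume "w \<in> C"
    then have w0: "srw_pos x w j = 0" and a: "evt D g t r (srw_pos 0 (sdrop j w))"
      by (auto simp: C_def A0_def)
    have "norm1_on D (\<lambda>y. real (loc_time_D (srw_pos x w) D t y) / real t - (g y)\<^sup>2)
            \<le> r + 4 * (real k / (real t - real k)) \<and> hit_tau (srw_pos x w) D t < \<infinity>"
      by (rule pathwise[where S' = "srw_pos 0 (sdrop j w)" and j = j])
         (use a w0 jk kt r in \<open>auto simp: evt_def srw_pos_sdrop\<close>)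
    then show "w \<in> B" by (simp add: B_def evt_def)
  qed
  have "emeasure srw_space C = emeasure srw_space {w. srw_pos x w j = 0} * emeasure srw_space A0"
    unfolding C_def by (rule split_meas[OF A0m])
  then have "measure srw_space C = measure srw_space {w. srw_pos x w j = 0} * measure srw_space A0"
    by (simp add: measure_def enn2real_mult)
  moreover have "measure srw_space C \<le> measure srw_space B"
    by (rule finite_measure_mono[OF CB Bm])
  ultimately show ?thesis by (simp add: srw_prob_def A0_def B_def)
qed

theorem proposition3p7:
  fixes D :: "(int ^ 'd) set" and g :: "int ^ 'd \<Rightarrow> real"
    and k t :: nat and r :: real and x :: "int ^ 'd"
  assumes "(\<lambda>y. \<bar>g y\<bar>) summable_on D"
    and "0 < k" and "k < t" and "0 < r"
    and "x \<in> lattice_closure D"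
  shows "srw_prob 0 (\<lambda>S. norm1_on D (\<lambda>y. real (loc_time_D S D t y) / real t - (g y)\<^sup>2) \<le> r
                          \<and> hit_tau S D t < \<infinity>)
         * (srw_prob x (\<lambda>S. S k = 0) + srw_prob x (\<lambda>S. S (k - 1) = 0))
       \<le> 2 * srw_prob x (\<lambda>S. norm1_on D (\<lambda>y. real (loc_time_D S D t y) / real t - (g y)\<^sup>2)
                                 \<le> r + 4 * (real k / (real t - real k))
                          \<and> hit_tau S D t < \<infinity>)"
proof -
  have k1: "srw_prob x (\<lambda>S. S k = 0) * srw_prob 0 (evt D g t r)
     \<le> srw_prob x (evt D g t (r + 4 * (real k / (real t - real k))))"
    by (rule key) (use assms in auto)
  have k2: "srw_prob x (\<lambda>S. S (k - 1) = 0) * srw_prob 0 (evt D g t r)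
     \<le> srw_prob x (evt D g t (r + 4 * (real k / (real t - real k))))"
    by (rule key) (use assms in auto)
  have e1: "(\<lambda>S. norm1_on D (\<lambda>y. real (loc_time_D S D t y) / real t - (g y)\<^sup>2) \<le> r
                          \<and> hit_tau S D t < \<infinity>) = evt D g t r"
    by (rule ext) (simp add: evt_def)
  have e2: "(\<lambda>S. norm1_on D (\<lambda>y. real (loc_time_D S D t y) / real t - (g y)\<^sup>2)
                                 \<le> r + 4 * (real k / (real t - real k))
                          \<and> hit_tau S D t < \<infinity>) = evt D g t (r + 4 * (real k / (real t - real k)))"
    by (rule ext) (simp add: evt_def)
  show ?thesis unfolding e1 e2 using k1 k2 by (simp add: distrib_left mult.commute)
qed

end
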